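(* Let $\kappa\in(0,4)$, let $u_0$ be as defined below, and let $\xi\in\mathbb{R}$. The function $u(\tau)=(1-\xi)u_0(\tau)+\xi$, $\tau\ge0$, which satisfies $u(0)=\xi$, $u'(0)=1-\xi$ and, for $\tau>0$, $$u''+(2-\kappa)u'+u=1+\sqrt{\frac{\kappa}{\pi\tau}}\,(\xi-1),$$ approaches its steady state value $1$ monotonically as $\tau\to\infty$: it is strictly increasing on $[0,\infty)$ if $\xi<1$, strictly decreasing if $\xi>1$, constant if $\xi=1$, and in all cases $u(\tau)\to1$.
   Context: For $\kappa\in(0,4)$, $\alpha,\beta$ are the roots of $m^2+(2-\kappa)m+1=0$ with $\operatorname{Im}\alpha>0$, $\beta=\overline\alpha$; square roots are principal; $\operatorname{Erfc}(z)=1-\frac{2}{\sqrt\pi}\int_0^z e^{-s^2}ds$ for complex $z$. The function $u_0$ is $$u_0(\tau)=1+\frac{\sqrt{\kappa}}{\alpha-\beta}\left[\frac{e^{\alpha\tau}\operatorname{Erfc}\sqrt{\alpha\tau}}{\sqrt{\alpha}}-\frac{e^{\beta\tau}\operatorname{Erfc}\sqrt{\beta\tau}}{\sqrt{\beta}}\right].$$ *)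

theory Defs
  imports "HOL-Complex_Analysis.Complex_Analysis"
begin

definition Erfc :: "complex \<Rightarrow> complex" where
  "Erfc z = 1 - (2 / complex_of_real (sqrt pi)) *
              contour_integral (linepath 0 z) (\<lambda>s. exp (- (s ^ 2)))"

definition alpha :: "real \<Rightarrow> complex" where
  "alpha \<kappa> = (THE m. m ^ 2 + complex_of_real (2 - \<kappa>) * m + 1 = 0 \<and> Im m > 0)"

definition beta :: "real \<Rightarrow> complex" where
  "beta \<kappa> = cnj (alpha \<kappa>)"

definition u0 :: "real \<Rightarrow> real \<Rightarrow> complex" where
  "u0 \<kappa> \<tau> = 1 + complex_of_real (sqrt \<kappa>) / (alpha \<kappa> - beta \<kappa>) *
     ( exp (alpha \<kappa> * \<tau>) * Erfc (csqrt (alpha \<kappa> * \<tau>)) / csqrt (alpha \<kappa>)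
     - exp (beta \<kappa> * \<tau>) * Erfc (csqrt (beta \<kappa> * \<tau>)) / csqrt (beta \<kappa>))"

end

theory Submission
  imports Defs "HOL-Probability.Probability"
begin


lemma alpha_eq:
  assumes "0 < k" "k < 4"
  shows "alpha k = Complex ((k-2)/2) (sqrt (k*(4-k))/2)"
proof -
  let ?A = "Complex ((k-2)/2) (sqrt (k*(4-k))/2)"
  have pos: "0 < k*(4-k)" using assms by simp
  have sq: "(sqrt (k*(4-k)))^2 = k*(4-k)" using pos by simp
  have P: "?A ^ 2 + complex_of_real (2 - k) * ?A + 1 = 0 \<and> Im ?A > 0"
  proof -
    have "((k-2)/2)*((k-2)/2) - (sqrt (k*(4-k))/2)*(sqrt (k*(4-k))/2) + (2-k)*((k-2)/2) + 1 = 0"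
      using sq by (simp add: power2_eq_square field_simps)
    then show ?thesis using pos by (simp add: complex_eq_iff power2_eq_square algebra_simps) (simp add: field_simps)
  qed
  show ?thesis
  proof (unfold alpha_def, rule the1_equality)
    show "\<exists>!m. m ^ 2 + complex_of_real (2 - k) * m + 1 = 0 \<and> Im m > 0"
    proof (rule ex1I[of _ ?A])
      show "?A ^ 2 + complex_of_real (2 - k) * ?A + 1 = 0 \<and> Im ?A > 0" by (rule P)
    next
      fix m assume m: "m ^ 2 + complex_of_real (2 - k) * m + 1 = 0 \<and> 0 < Im m"
      obtain x y where xy: "m = Complex x y" by (cases m)
      have e1: "x*x - y*y + (2-k)*x + 1 = 0" and e2: "2*x*y + (2-k)*y = 0" and y: "y > 0"
        using m unfolding xy by (auto simp: complex_eq_iff power2_eq_square algebra_simps)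
      have "y * (2*x + (2-k)) = 0" using e2 by (simp add: algebra_simps)
      hence "2*x + (2-k) = 0" using y by simp
      hence x: "x = (k-2)/2" by (simp add: field_simps)
      have "y*y = k*(4-k)/4" using e1 x by (simp add: field_simps power2_eq_square)
      hence "sqrt (y*y) = sqrt (k*(4-k)/4)" by (simp only:)
      moreover have "sqrt (y*y) = y" using y by simp
      moreover have "sqrt (k*(4-k)/4) = sqrt (k*(4-k))/2"
        by (simp add: real_sqrt_divide)
      ultimately have "y = sqrt (k*(4-k))/2" by simp
      with x show "m = ?A" by (simp add: xy)
    qed
  qed (rule P)
qed

lemma alpha_props:
  assumes "0 < k" "k < 4"
  shows "cmod (alpha k) = 1" "Im (alpha k) > 0" "Re (alpha k) = (k-2)/2"
    "cmod (beta k) = 1" "Im (beta k) < 0"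
    "alpha k + beta k = of_real (k - 2)" "alpha k * beta k = 1"
proof -
  have pos: "0 < k*(4-k)" using assms by simp
  have sq: "(sqrt (k*(4-k)))^2 = k*(4-k)" using pos by simp
  have n: "((k-2)/2)^2 + (sqrt (k*(4-k))/2)^2 = 1"
    using sq by (simp add: power_divide field_simps power2_eq_square)
  show "cmod (alpha k) = 1" using n by (simp add: alpha_eq[OF assms] cmod_def)
  show "Im (alpha k) > 0" using pos by (simp add: alpha_eq[OF assms])
  show "Re (alpha k) = (k-2)/2" by (simp add: alpha_eq[OF assms])
  show "cmod (beta k) = 1" using n by (simp add: beta_def alpha_eq[OF assms] cmod_def)
  show "Im (beta k) < 0" using pos by (simp add: beta_def alpha_eq[OF assms])
  show "alpha k + beta k = of_real (k - 2)"
    by (simp add: beta_def alpha_eq[OF assms] complex_eq_iff)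
  show "alpha k * beta k = 1"
    using n by (simp add: beta_def alpha_eq[OF assms] complex_eq_iff power2_eq_square)
qed

lemma csqrt_mult_of_real:
  assumes "0 \<le> t"
  shows "csqrt (a * of_real t) = csqrt a * of_real (sqrt t)"
proof (rule csqrt_unique)
  show "(csqrt a * complex_of_real (sqrt t))\<^sup>2 = a * complex_of_real t"
    using assms by (simp add: power_mult_distrib flip: of_real_power)
  have "0 < Re (csqrt a) \<or> Re (csqrt a) = 0 \<and> 0 \<le> Im (csqrt a)"
    using csqrt_principal by blast
  then show "0 < Re (csqrt a * complex_of_real (sqrt t)) \<or>
    Re (csqrt a * complex_of_real (sqrt t)) = 0 \<and> 0 \<le> Im (csqrt a * complex_of_real (sqrt t))"
    using assms by (cases "t = 0") auto
qed

lemma Re_csqrt_pos: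
  assumes "Im a \<noteq> 0"
  shows "0 < Re (csqrt a)"
proof (rule ccontr)
  assume "\<not> 0 < Re (csqrt a)"
  then have "Re (csqrt a) = 0" using Re_csqrt[of a] by simp
  then have "Im ((csqrt a)^2) = 0" by (simp add: power2_eq_square)
  then show False using assms by simp
qed

lemma Erfc_integral:
  "Erfc c = 1 - (2 / of_real (sqrt pi)) *
     (integral {0..1} (\<lambda>t. exp (-((of_real t * c)^2))) * c)"
  unfolding Erfc_def contour_integral_integral vector_derivative_linepath_at
  by (simp add: linepath_def scaleR_conv_of_real integral_mult_left)



lemma unit_props:
  assumes "cmod a = 1" "Im a \<noteq> 0"
  shows "(Re a)\<^sup>2 + (Im a)\<^sup>2 = 1" "0 < 1 + Re a" "Re a \<le> 1"
proof -
  show r2: "(Re a)\<^sup>2 + (Im a)\<^sup>2 = 1"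
    using assms(1) unfolding cmod_def by (metis real_sqrt_eq_1_iff)
  show "Re a \<le> 1" using abs_Re_le_cmod[of a] assms(1) by simp
  have "Re a \<ge> -1" using abs_Re_le_cmod[of a] assms(1) by simp
  moreover have "Re a \<noteq> -1"
  proof
    assume "Re a = -1"
    then have "(Im a)\<^sup>2 = 0" using r2 by simp
    then show False using assms(2) by simp
  qed
  ultimately show "0 < 1 + Re a" by simp
qed

lemma norm_lower:
  assumes "cmod a = 1" "Im a \<noteq> 0"
  shows "sqrt ((1 + Re a)/2) * (1 + s\<^sup>2) \<le> cmod (of_real (s\<^sup>2) + a)"
proof -
  note u = unit_props[OF assms]
  have h: "(Im a)\<^sup>2 = 1 - (Re a)\<^sup>2" using u(1) by simp
  have id: "2 * ((s\<^sup>2 + Re a)\<^sup>2 + (Im a)\<^sup>2) - (1 + Re a) * (1 + s\<^sup>2)\<^sup>2 = (1 - Re a) * (s\<^sup>2 - 1)\<^sup>2"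
    using h by algebra
  have "0 \<le> (1 - Re a) * (s\<^sup>2 - 1)\<^sup>2" using u(3) by simp
  then have le: "(1 + Re a)/2 * (1 + s\<^sup>2)\<^sup>2 \<le> (s\<^sup>2 + Re a)\<^sup>2 + (Im a)\<^sup>2" using id by simp
  have "sqrt ((1 + Re a)/2) * (1 + s\<^sup>2) = sqrt ((1 + Re a)/2 * (1 + s\<^sup>2)\<^sup>2)"
    unfolding real_sqrt_mult real_sqrt_abs by simp
  also have "\<dots> \<le> sqrt ((s\<^sup>2 + Re a)\<^sup>2 + (Im a)\<^sup>2)" using le by (rule real_sqrt_le_mono)
  also have "\<dots> = cmod (of_real (s\<^sup>2) + a)" by (simp add: cmod_def)
  finally show ?thesis .
qed

lemma nonzero_den:
  assumes "Im a \<noteq> 0"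
  shows "of_real (s\<^sup>2) + a \<noteq> 0"
proof
  assume "of_real (s\<^sup>2) + a = 0"
  then have "Im (of_real (s\<^sup>2) + a) = 0" by simp
  then show False using assms by simp
qed

lemma integrable_recip:
  assumes "cmod a = 1" "Im a \<noteq> 0"
  shows "set_integrable lborel {0<..} (\<lambda>s::real. 1 / (of_real (s\<^sup>2) + a))"
proof -
  define d where "d = sqrt ((1 + Re a)/2)"
  have d: "0 < d" using unit_props(2)[OF assms] by (simp add: d_def)
  have i1: "set_integrable lborel {0<..} (\<lambda>s::real. 1 / (1 + s\<^sup>2))"
    using integrable_I0i_1_div_plus_square by (simp add: interval_lebesgue_integral_0_infty)
  have i2: "set_integrable lborel {0<..} (\<lambda>s::real. (1/d) * (1 / (1 + s\<^sup>2)))"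
    using set_integrable_mult_right[OF i1, of "1/d"] by simp
  show ?thesis
  proof (rule set_integrable_bound[OF i2])
    show "set_borel_measurable lborel {0<..} (\<lambda>s::real. 1 / (of_real (s\<^sup>2) + a))"
      unfolding set_borel_measurable_def by measurable
    show "AE x in lborel. x \<in> {0<..} \<longrightarrow> norm (1 / (of_real (x\<^sup>2) + a)) \<le> norm ((1/d) * (1 / (1 + x\<^sup>2)))"
    proof (rule AE_I2, rule impI)
      fix x :: real
      have lo: "d * (1 + x\<^sup>2) \<le> cmod (of_real (x\<^sup>2) + a)" using norm_lower[OF assms] d_def by simp
      have p: "0 < d * (1 + x\<^sup>2)" using d by (simp add: add_pos_nonneg)
      have "norm (1 / (of_real (x\<^sup>2) + a)) = 1 / cmod (of_real (x\<^sup>2) + a)"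
        by (simp add: norm_divide)
      also have "\<dots> \<le> 1 / (d * (1 + x\<^sup>2))" using lo p by (intro divide_left_mono) (auto intro: mult_pos_pos order_less_le_trans)
      also have "\<dots> = norm ((1/d) * (1 / (1 + x\<^sup>2)))" using p d by (simp add: abs_of_pos)
      finally show "norm (1 / (of_real (x\<^sup>2) + a)) \<le> norm ((1/d) * (1 / (1 + x\<^sup>2)))" .
    qed
  qed
qed

lemma aux_div: "(c::complex) \<noteq> 0 \<Longrightarrow> ((A*(1-0) - B*(1+0))*c - L*0)/(c*c) = (A*1 - B*1)/c"
  by (simp add: field_simps)

lemma aux_inv: "(p::complex) \<noteq> 0 \<Longrightarrow> q \<noteq> 0 \<Longrightarrow> q - p \<noteq> 0 \<Longrightarrow> (inverse p * 1 - inverse q * 1)/(q - p) = 1/(p*q)"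
  by (simp add: divide_simps)

lemma integral_recip:
  assumes "cmod a = 1" "Im a \<noteq> 0"
  shows "(LINT s:{0<..}|lborel. 1 / (of_real (s\<^sup>2) + a)) = of_real pi / (2 * csqrt a)"
proof -
  define b where "b = csqrt a"
  have rb: "0 < Re b" using Re_csqrt_pos[OF assms(2)] by (simp add: b_def)
  have b0: "b \<noteq> 0" using rb by auto
  have b2: "b\<^sup>2 = a" by (simp add: b_def)
  define F where "F z = (Ln (z - \<i>*b) - Ln (z + \<i>*b)) / (2*\<i>*b)" for z
  define G where "G x = F (of_real x)" for x :: real
  have nz1: "of_real x - \<i>*b \<notin> \<real>\<^sub>\<le>\<^sub>0" for x :: real
    using rb by (auto simp: complex_nonpos_Reals_iff)
  have nz2: "of_real x + \<i>*b \<notin> \<real>\<^sub>\<le>\<^sub>0" for x :: real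
    using rb by (auto simp: complex_nonpos_Reals_iff)
  have ne1: "of_real x - \<i>*b \<noteq> 0" for x :: real using nz1[of x] by auto
  have ne2: "of_real x + \<i>*b \<noteq> 0" for x :: real using nz2[of x] by auto
  have dF: "(F has_field_derivative 1 / (of_real (x\<^sup>2) + a)) (at (of_real x))" for x :: real
  proof -
    have "(F has_field_derivative (inverse (of_real x - \<i>*b) * 1 - inverse (of_real x + \<i>*b) * 1) / (2*\<i>*b)) (at (of_real x))"
      unfolding F_def
      apply (rule derivative_eq_intros | rule nz1 nz2 | rule refl)+
      using b0 apply simp
      apply (rule aux_div) using b0 apply simp
      done
    moreover have "(inverse (of_real x - \<i>*b) * 1 - inverse (of_real x + \<i>*b) * 1) / (2*\<i>*b) = 1 / (of_real (x\<^sup>2) + a)"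
    proof -
      have e: "of_real (x\<^sup>2) + a = (of_real x - \<i>*b) * (of_real x + \<i>*b)"
        using b2 by (simp add: algebra_simps power2_eq_square)
      have c: "2*\<i>*b = (of_real x + \<i>*b) - (of_real x - \<i>*b)" by simp
      show ?thesis unfolding e c using ne1[of x] ne2[of x] b0
        by (intro aux_inv) auto
    qed
    ultimately show ?thesis by simp
  qed
  have dG: "(G has_vector_derivative 1 / (of_real (x\<^sup>2) + a)) (at x)" for x :: real
    unfolding G_def by (rule has_vector_derivative_real_field[OF dF])
  have contf: "isCont (\<lambda>x::real. 1 / (of_real (x\<^sup>2) + a)) x" for x
    using nonzero_den[OF assms(2)] by (auto intro!: continuous_intros)
  have integ: "set_integrable lborel (einterval 0 \<infinity>) (\<lambda>x::real. 1 / (of_real (x\<^sup>2) + a))"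
    using integrable_recip[OF assms] by (simp add: zero_ereal_def)
  have G0: "G 0 = - (of_real pi / (2 * b))"
  proof -
    have ib: "\<i>*b \<noteq> 0" using b0 by simp
    have "Ln (- (\<i>*b)) = Ln (\<i>*b) - \<i> * pi"
      using Ln_minus[OF ib] rb by simp
    then have L: "Ln (\<i>*b) = Ln (- (\<i>*b)) + \<i> * pi" by simp
    show ?thesis unfolding G_def F_def using b0 by (simp add: L field_simps)
  qed
  have A: "((G \<circ> real_of_ereal) \<longlongrightarrow> G 0) (at_right 0)"
  proof -
    have "continuous (at 0) G" using dG[of 0] by (rule has_vector_derivative_continuous)
    then have "(G \<longlongrightarrow> G 0) (at 0)" by (simp add: isCont_def)
    then have "(G \<longlongrightarrow> G 0) (at_right 0)" by (rule tendsto_mono[OF at_within_le_at])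
    then show ?thesis unfolding zero_ereal_def ereal_tendsto_simps1 .
  qed
  have B: "((G \<circ> real_of_ereal) \<longlongrightarrow> 0) (at_left \<infinity>)"
  proof -
    have inv: "((\<lambda>x::real. inverse x) \<longlongrightarrow> 0) at_top"
      by (rule tendsto_inverse_0_at_top[OF filterlim_ident])
    have t1: "((\<lambda>x::real. 1 - \<i>*b * of_real (inverse x)) \<longlongrightarrow> 1 - \<i>*b * of_real 0) at_top"
      by (intro tendsto_intros inv)
    have t2: "((\<lambda>x::real. 1 + \<i>*b * of_real (inverse x)) \<longlongrightarrow> 1 + \<i>*b * of_real 0) at_top"
      by (intro tendsto_intros inv)
    have "((\<lambda>x::real. (Ln (1 - \<i>*b * of_real (inverse x)) - Ln (1 + \<i>*b * of_real (inverse x))) / (2*\<i>*b))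
          \<longlongrightarrow> (Ln 1 - Ln 1) / (2*\<i>*b)) at_top"
      using t1 t2 b0 by (intro tendsto_intros) (auto simp: complex_nonpos_Reals_iff)
    then have lim: "((\<lambda>x::real. (Ln (1 - \<i>*b * of_real (inverse x)) - Ln (1 + \<i>*b * of_real (inverse x))) / (2*\<i>*b))
          \<longlongrightarrow> 0) at_top" by simp
    have ev: "eventually (\<lambda>x. (Ln (1 - \<i>*b * of_real (inverse x)) - Ln (1 + \<i>*b * of_real (inverse x))) / (2*\<i>*b) = G x) at_top"
      using eventually_gt_at_top[of 0]
    proof eventually_elim
      case (elim x)
      have xr: "of_real x \<noteq> (0::complex)" using elim by simp
      have q1: "1 - \<i>*b * of_real (inverse x) \<noteq> 0"
      proof
        assume "1 - \<i>*b * of_real (inverse x) = 0"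
        then have "Im (1 - \<i>*b * of_real (inverse x)) = 0" by simp
        then show False using rb elim by simp
      qed
      have q2: "1 + \<i>*b * of_real (inverse x) \<noteq> 0"
      proof
        assume "1 + \<i>*b * of_real (inverse x) = 0"
        then have "Im (1 + \<i>*b * of_real (inverse x)) = 0" by simp
        then show False using rb elim by simp
      qed
      have e1: "of_real x - \<i>*b = of_real x * (1 - \<i>*b * of_real (inverse x))"
        using xr by (simp add: algebra_simps of_real_inverse)
      have e2: "of_real x + \<i>*b = of_real x * (1 + \<i>*b * of_real (inverse x))"
        using xr by (simp add: algebra_simps of_real_inverse)
      show ?case unfolding G_def F_def e1 e2
        using Ln_times_of_real[OF elim q1] Ln_times_of_real[OF elim q2] by simp
    qed
    have "(G \<longlongrightarrow> 0) at_top" using tendsto_cong[OF ev] lim by simp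
    then show ?thesis unfolding ereal_tendsto_simps1 .
  qed
  have "(LBINT x=0..\<infinity>. 1 / (of_real (x\<^sup>2) + a)) = 0 - G 0"
    by (rule interval_integral_FTC_integrable[OF _ dG contf integ A B]) simp
  then show ?thesis using G0 by (simp add: interval_lebesgue_integral_0_infty b_def)
qed



lemma gauss_S:
  fixes c :: real
  assumes c: "0 < c"
  shows "has_bochner_integral lborel (\<lambda>s. indicator {0<..} s *\<^sub>R exp (- (c * s\<^sup>2))) (sqrt pi / (2 * sqrt c))"
proof -
  have sc: "sqrt c \<noteq> 0" "0 < sqrt c" using c by auto
  have "has_bochner_integral lborel (\<lambda>x. indicator {0..} x *\<^sub>R exp (- x\<^sup>2)) (sqrt pi / 2)"
    by (rule gaussian_moment_0)
  then have "has_bochner_integral lborel (\<lambda>x. indicator {0..} (0 + sqrt c * x) *\<^sub>R exp (- (0 + sqrt c * x)\<^sup>2)) ((sqrt pi / 2) /\<^sub>R \<bar>sqrt c\<bar>)"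
    using lborel_has_bochner_integral_real_affine_iff[OF sc(1), of "\<lambda>x. indicator {0..} x *\<^sub>R exp (- x\<^sup>2)" "sqrt pi / 2" 0]
    by simp
  also have "(\<lambda>x. indicator {0..} (0 + sqrt c * x) *\<^sub>R exp (- (0 + sqrt c * x)\<^sup>2)) = (\<lambda>x. indicator {0..} x *\<^sub>R exp (- (c * x\<^sup>2)))"
  proof (rule ext)
    fix x :: real
    have "(0 + sqrt c * x)\<^sup>2 = c * x\<^sup>2" using c by (simp add: power_mult_distrib)
    moreover have "indicator {0..} (0 + sqrt c * x) = (indicator {0..} x :: real)"
      using sc by (simp add: indicator_def zero_le_mult_iff)
    ultimately show "indicator {0..} (0 + sqrt c * x) *\<^sub>R exp (- (0 + sqrt c * x)\<^sup>2) = indicator {0..} x *\<^sub>R exp (- (c * x\<^sup>2))"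
      by simp
  qed
  also have "(sqrt pi / 2) /\<^sub>R \<bar>sqrt c\<bar> = sqrt pi / (2 * sqrt c)"
    using sc by (simp add: divide_simps)
  finally have *: "has_bochner_integral lborel (\<lambda>x. indicator {0..} x *\<^sub>R exp (- (c * x\<^sup>2))) (sqrt pi / (2 * sqrt c))" .
  have ae: "AE x in lborel. indicator {0..} x *\<^sub>R exp (- (c * x\<^sup>2)) = indicator {0<..} x *\<^sub>R exp (- (c * x\<^sup>2))"
    using AE_lborel_singleton[of 0] by eventually_elim (simp add: indicator_def)
  have m1: "(\<lambda>x::real. indicator {0..} x *\<^sub>R exp (- (c * x\<^sup>2))) \<in> borel_measurable lborel" by measurable
  have m2: "(\<lambda>x::real. indicator {0<..} x *\<^sub>R exp (- (c * x\<^sup>2))) \<in> borel_measurable lborel" by measurable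
  show ?thesis using has_bochner_integral_cong_AE[OF m1 m2 ae] * by simp
qed


lemma norm_exp_h:
  fixes a :: complex
  shows "norm (of_real (2*\<tau>*t) * exp (- (of_real (\<tau>*t\<^sup>2) * (of_real (s\<^sup>2) + a))))
   = \<bar>2*\<tau>*t\<bar> * exp (- (\<tau>*t\<^sup>2*Re a)) * exp (- (\<tau>*t\<^sup>2 * s\<^sup>2))"
proof -
  have "norm (exp (- (of_real (\<tau>*t\<^sup>2) * (of_real (s\<^sup>2) + a)))) = exp (- (\<tau>*t\<^sup>2*Re a)) * exp (- (\<tau>*t\<^sup>2 * s\<^sup>2))"
    by (simp add: norm_exp_eq_Re algebra_simps flip: exp_add)
  then show ?thesis by (simp add: norm_mult abs_mult)
qed

lemma h_split:
  fixes a :: complex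
  shows "of_real (2*\<tau>*t) * exp (- (of_real (\<tau>*t\<^sup>2) * (of_real (s\<^sup>2) + a)))
   = (of_real (2*\<tau>*t) * exp (- (of_real (\<tau>*t\<^sup>2) * a))) * of_real (exp (- (\<tau>*t\<^sup>2 * s\<^sup>2)))"
  by (simp add: algebra_simps flip: exp_add exp_of_real)

lemma inner_s:
  fixes \<tau> t :: real and a :: complex
  assumes "0 < \<tau>" "0 < t"
  shows "has_bochner_integral lborel
     (\<lambda>s. indicator {0<..} s *\<^sub>R (of_real (2*\<tau>*t) * exp (- (of_real (\<tau>*t\<^sup>2) * (of_real (s\<^sup>2) + a)))))
     (of_real (sqrt pi * sqrt \<tau>) * exp (- (of_real (\<tau>*t\<^sup>2) * a)))"
proof -
  have c: "0 < \<tau>*t\<^sup>2" using assms by simp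
  have g: "has_bochner_integral lborel (\<lambda>s. indicator {0<..} s *\<^sub>R exp (- (\<tau>*t\<^sup>2 * s\<^sup>2))) (sqrt pi / (2 * sqrt (\<tau>*t\<^sup>2)))"
    by (rule gauss_S[OF c])
  have g2: "has_bochner_integral lborel (\<lambda>s. complex_of_real (indicator {0<..} s *\<^sub>R exp (- (\<tau>*t\<^sup>2 * s\<^sup>2)))) (of_real (sqrt pi / (2 * sqrt (\<tau>*t\<^sup>2))))"
    using has_bochner_integral_of_real[OF g] .
  let ?C = "of_real (2*\<tau>*t) * exp (- (of_real (\<tau>*t\<^sup>2) * a))"
  have g3: "has_bochner_integral lborel (\<lambda>s. ?C * complex_of_real (indicator {0<..} s *\<^sub>R exp (- (\<tau>*t\<^sup>2 * s\<^sup>2)))) (?C * of_real (sqrt pi / (2 * sqrt (\<tau>*t\<^sup>2))))"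
    by (rule has_bochner_integral_mult_right[OF g2])
  have e1: "(\<lambda>s. ?C * complex_of_real (indicator {0<..} s *\<^sub>R exp (- (\<tau>*t\<^sup>2 * s\<^sup>2)))) =
     (\<lambda>s. indicator {0<..} s *\<^sub>R (of_real (2*\<tau>*t) * exp (- (of_real (\<tau>*t\<^sup>2) * (of_real (s\<^sup>2) + a)))))"
    by (rule ext) (subst h_split, simp add: indicator_def)
  have st: "sqrt (\<tau>*t\<^sup>2) = sqrt \<tau> * t" using assms by (simp add: real_sqrt_mult)
  have e2: "?C * of_real (sqrt pi / (2 * sqrt (\<tau>*t\<^sup>2))) = of_real (sqrt pi * sqrt \<tau>) * exp (- (of_real (\<tau>*t\<^sup>2) * a))"
  proof -
    have "2*\<tau>*t * (sqrt pi / (2 * sqrt (\<tau>*t\<^sup>2))) = sqrt pi * sqrt \<tau>"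
      unfolding st using assms by (simp add: field_simps)
    then have "complex_of_real (2*\<tau>*t) * of_real (sqrt pi / (2 * sqrt (\<tau>*t\<^sup>2))) = of_real (sqrt pi * sqrt \<tau>)"
      by (metis of_real_mult)
    moreover have "?C * of_real (sqrt pi / (2 * sqrt (\<tau>*t\<^sup>2))) = (complex_of_real (2*\<tau>*t) * of_real (sqrt pi / (2 * sqrt (\<tau>*t\<^sup>2)))) * exp (- (of_real (\<tau>*t\<^sup>2) * a))"
      by (simp only: ac_simps)
    ultimately show ?thesis by simp
  qed
  show ?thesis using g3 unfolding e1 e2 .
qed

lemma inner_t:
  fixes \<tau> :: real and w :: complex
  assumes w: "w \<noteq> 0"
  shows "(LINT t:{0..1}|lborel. of_real (2*\<tau>*t) * exp (- (of_real (\<tau>*t\<^sup>2) * w))) = (1 - exp (- (of_real \<tau> * w))) / w"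
proof -
  define Fc where "Fc z = - exp (- (of_real \<tau> * z\<^sup>2 * w)) / w" for z :: complex
  have dF: "(Fc has_field_derivative of_real (2*\<tau>*t) * exp (- (of_real (\<tau>*t\<^sup>2) * w))) (at (of_real t))" for t :: real
  proof -
    have "(Fc has_field_derivative - (exp (- (of_real \<tau> * (of_real t)\<^sup>2 * w)) * (- (of_real \<tau> * (2 * of_real t) * w))) / w) (at (of_real t))"
      unfolding Fc_def by (auto intro!: derivative_eq_intros simp: power2_eq_square algebra_simps)
    moreover have "- (exp (- (of_real \<tau> * (of_real t)\<^sup>2 * w)) * (- (of_real \<tau> * (2 * of_real t) * w))) / w
        = of_real (2*\<tau>*t) * exp (- (of_real (\<tau>*t\<^sup>2) * w))"
      using w by (simp add: field_simps)
    ultimately show ?thesis by simp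
  qed
  have "(LBINT t=ereal 0..ereal 1. of_real (2*\<tau>*t) * exp (- (of_real (\<tau>*t\<^sup>2) * w))) = Fc (of_real 1) - Fc (of_real 0)"
    apply (rule interval_integral_FTC_finite[where F="\<lambda>x. Fc (of_real x)"])
    subgoal by (intro continuous_intros)
    subgoal by (rule has_vector_derivative_real_field[OF dF])
    done
  also have "Fc (of_real 1) - Fc (of_real 0) = (1 - exp (- (of_real \<tau> * w))) / w"
    unfolding Fc_def using w by (simp add: field_simps)
  finally show ?thesis by (simp add: interval_integral_Icc)
qed

lemma fubini_id:
  fixes \<tau> :: real and a :: complex
  assumes \<tau>: "0 < \<tau>" and den: "\<And>s::real. of_real (s\<^sup>2) + a \<noteq> 0"
  shows "(LINT s:{0<..}|lborel. (1 - exp (- (of_real \<tau> * (of_real (s\<^sup>2) + a)))) / (of_real (s\<^sup>2) + a))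
       = of_real (sqrt pi * sqrt \<tau>) * (LINT t:{0..1}|lborel. exp (- (of_real (\<tau>*t\<^sup>2) * a)))"
proof -
  define h where "h t s = of_real (2*\<tau>*t) * exp (- (of_real (\<tau>*t\<^sup>2) * (of_real (s\<^sup>2) + a)))" for t s :: real
  define T where "T = {0<..(1::real)}"
  define S where "S = ({0<..} :: real set)"
  define f where "f t s = indicator T t *\<^sub>R (indicator S s *\<^sub>R h t s)" for t s :: real
  have meas: "case_prod f \<in> borel_measurable (lborel \<Otimes>\<^sub>M lborel)"
    unfolding f_def h_def T_def S_def by measurable
  have int_s: "integrable lborel (\<lambda>s. f t s)" for t
  proof (cases "t \<in> T")
    case True
    then have t: "0 < t" by (simp add: T_def)
    have "integrable lborel (\<lambda>s. indicator S s *\<^sub>R h t s)"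
      using inner_s[OF \<tau> t, of a] unfolding h_def S_def by (simp add: has_bochner_integral_iff)
    then show ?thesis using True by (simp add: f_def)
  next
    case False
    then show ?thesis by (simp add: f_def)
  qed
  define g where "g t = sqrt pi * sqrt \<tau> * exp (- (\<tau>*t\<^sup>2*Re a))" for t :: real
  have norm_int: "(\<integral>s. norm (f t s) \<partial>lborel) = indicator T t * g t" for t
  proof (cases "t \<in> T")
    case True
    then have t: "0 < t" by (simp add: T_def)
    have c: "0 < \<tau>*t\<^sup>2" using \<tau> t by simp
    have e: "norm (f t s) = (2*\<tau>*t * exp (- (\<tau>*t\<^sup>2*Re a))) * (indicator S s *\<^sub>R exp (- (\<tau>*t\<^sup>2 * s\<^sup>2)))" for s
    proof -
      have n: "norm (h t s) = \<bar>2*\<tau>*t\<bar> * exp (- (\<tau>*t\<^sup>2*Re a)) * exp (- (\<tau>*t\<^sup>2 * s\<^sup>2))"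
        unfolding h_def by (rule norm_exp_h)
      have "norm (f t s) = indicator S s * norm (h t s)" using True by (simp add: f_def indicator_def)
      then show ?thesis unfolding n using \<tau> t by (simp add: indicator_def)
    qed
    have "(\<integral>s. norm (f t s) \<partial>lborel) = (2*\<tau>*t * exp (- (\<tau>*t\<^sup>2*Re a))) * (sqrt pi / (2 * sqrt (\<tau>*t\<^sup>2)))"
      unfolding e using gauss_S[OF c] unfolding S_def by (simp add: has_bochner_integral_iff)
    also have "\<dots> = g t"
    proof -
      have st: "sqrt (\<tau>*t\<^sup>2) = sqrt \<tau> * t" using \<tau> t by (simp add: real_sqrt_mult)
      show ?thesis unfolding st g_def using \<tau> t by (simp add: field_simps)
    qed
    finally show ?thesis using True by simp
  next
    case False
    then show ?thesis by (simp add: f_def)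
  qed
  have gint: "set_integrable lborel T g"
  proof -
    have "set_integrable lborel {0..1} g"
      unfolding g_def by (intro borel_integrable_atLeastAtMost' continuous_intros)
    then show ?thesis by (rule set_integrable_subset) (auto simp: T_def)
  qed
  have int1: "integrable lborel (\<lambda>t. \<integral>s. norm (case_prod f (t, s)) \<partial>lborel)"
    using gint unfolding set_integrable_def by (simp add: norm_int)
  have integ: "integrable (lborel \<Otimes>\<^sub>M lborel) (case_prod f)"
    by (rule lborel_pair.Fubini_integrable[OF meas int1]) (simp add: int_s)
  have fub: "(\<integral>s. (\<integral>t. f t s \<partial>lborel) \<partial>lborel) = (\<integral>t. (\<integral>s. f t s \<partial>lborel) \<partial>lborel)"
    by (rule lborel_pair.Fubini_integral[OF integ])
  have lhs: "(\<integral>t. f t s \<partial>lborel) = indicator S s *\<^sub>R ((1 - exp (- (of_real \<tau> * (of_real (s\<^sup>2) + a)))) / (of_real (s\<^sup>2) + a))" for s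
  proof -
    have eq: "(\<lambda>t. f t s) = (\<lambda>t. indicator S s *\<^sub>R (indicator {0..1} t *\<^sub>R h t s))"
      by (rule ext) (auto simp: f_def T_def h_def indicator_def)
    have "(\<integral>t. f t s \<partial>lborel) = indicator S s *\<^sub>R (LINT t:{0..1}|lborel. h t s)"
      unfolding eq set_lebesgue_integral_def by (rule integral_scaleR_right)
    also have "(LINT t:{0..1}|lborel. h t s) = (1 - exp (- (of_real \<tau> * (of_real (s\<^sup>2) + a)))) / (of_real (s\<^sup>2) + a)"
      unfolding h_def by (rule inner_t[OF den])
    finally show ?thesis .
  qed
  have rhs: "(\<integral>s. f t s \<partial>lborel) = indicator T t *\<^sub>R (of_real (sqrt pi * sqrt \<tau>) * exp (- (of_real (\<tau>*t\<^sup>2) * a)))" for t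
  proof (cases "t \<in> T")
    case True
    then have t: "0 < t" by (simp add: T_def)
    have "(\<integral>s. f t s \<partial>lborel) = (\<integral>s. indicator S s *\<^sub>R h t s \<partial>lborel)"
      using True by (simp add: f_def)
    also have "\<dots> = of_real (sqrt pi * sqrt \<tau>) * exp (- (of_real (\<tau>*t\<^sup>2) * a))"
      using inner_s[OF \<tau> t, of a] unfolding h_def S_def by (simp add: has_bochner_integral_iff)
    finally show ?thesis using True by simp
  next
    case False
    then show ?thesis by (simp add: f_def)
  qed
  have "(LINT s:S|lborel. (1 - exp (- (of_real \<tau> * (of_real (s\<^sup>2) + a)))) / (of_real (s\<^sup>2) + a))
      = (\<integral>t. indicator T t *\<^sub>R (of_real (sqrt pi * sqrt \<tau>) * exp (- (of_real (\<tau>*t\<^sup>2) * a))) \<partial>lborel)"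
    using fub unfolding lhs rhs set_lebesgue_integral_def .
  also have "\<dots> = of_real (sqrt pi * sqrt \<tau>) * (LINT t:T|lborel. exp (- (of_real (\<tau>*t\<^sup>2) * a)))"
    by (simp add: set_lebesgue_integral_def[symmetric])
  also have "(LINT t:T|lborel. exp (- (of_real (\<tau>*t\<^sup>2) * a))) = (LINT t:{0..1}|lborel. exp (- (of_real (\<tau>*t\<^sup>2) * a)))"
  proof (rule set_integral_cong_set)
    show "set_borel_measurable lborel {0..1} (\<lambda>t. exp (- (of_real (\<tau>*t\<^sup>2) * a)))"
      unfolding set_borel_measurable_def by measurable
    show "set_borel_measurable lborel T (\<lambda>t. exp (- (of_real (\<tau>*t\<^sup>2) * a)))"
      unfolding set_borel_measurable_def T_def by measurable
    show "AE x in lborel. (x \<in> {0..1}) = (x \<in> T)"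
      using AE_lborel_singleton[of 0] by eventually_elim (auto simp: T_def)
  qed
  finally show ?thesis unfolding S_def .
qed


lemma fubini_id0:
  fixes \<tau> :: real and a :: complex
  assumes \<tau>: "0 \<le> \<tau>" and den: "\<And>s::real. of_real (s\<^sup>2) + a \<noteq> 0"
  shows "(LINT s:{0<..}|lborel. (1 - exp (- (of_real \<tau> * (of_real (s\<^sup>2) + a)))) / (of_real (s\<^sup>2) + a))
       = of_real (sqrt pi * sqrt \<tau>) * (LINT t:{0..1}|lborel. exp (- (of_real (\<tau>*t\<^sup>2) * a)))"
proof (cases "\<tau> = 0")
  case True
  then show ?thesis by simp
next
  case False
  then show ?thesis using fubini_id[OF _ den] \<tau> by simp
qed

lemma rep:
  fixes a :: complex and \<tau> :: real
  assumes a1: "cmod a = 1" and ai: "Im a \<noteq> 0" and \<tau>: "0 \<le> \<tau>"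
  shows "exp (a * of_real \<tau>) * Erfc (csqrt (a * of_real \<tau>)) / csqrt a
       = (2 / of_real pi) * (LINT s:{0<..}|lborel. of_real (exp (- (\<tau> * s\<^sup>2))) / (of_real (s\<^sup>2) + a))"
proof -
  define b where "b = csqrt a"
  have b0: "b \<noteq> 0" using Re_csqrt_pos[OF ai] by (auto simp: b_def)
  have b2: "b\<^sup>2 = a" by (simp add: b_def)
  define c where "c = b * of_real (sqrt \<tau>)"
  have cs: "csqrt (a * of_real \<tau>) = c" unfolding c_def b_def by (rule csqrt_mult_of_real[OF \<tau>])
  define I where "I = (LINT t:{0..1}|lborel. exp (- (of_real (\<tau>*t\<^sup>2) * a)))"
  have sq: "(of_real t * c)\<^sup>2 = of_real (\<tau>*t\<^sup>2) * a" for t :: real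
  proof -
    have "(complex_of_real (sqrt \<tau>))\<^sup>2 = of_real \<tau>" using \<tau> by (simp flip: of_real_power)
    then show ?thesis using b2 by (simp add: c_def power_mult_distrib algebra_simps)
  qed
  have HK: "integral {0..1} (\<lambda>t. exp (-((of_real t * c)^2))) = I"
  proof -
    have si: "set_integrable lborel {0..1} (\<lambda>t::real. exp (- (of_real (\<tau>*t\<^sup>2) * a)))"
      by (intro borel_integrable_atLeastAtMost' continuous_intros)
    show ?thesis unfolding sq I_def using set_borel_integral_eq_integral(2)[OF si] by simp
  qed
  have erf: "Erfc c = 1 - (2 / of_real (sqrt pi)) * (I * c)"
    using Erfc_integral[of c] HK by simp
  define w where "w s = of_real (s\<^sup>2) + a" for s :: real
  have den: "w s \<noteq> 0" for s using nonzero_den[OF ai] by (simp add: w_def)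
  define E where "E s = exp (- (of_real \<tau> * w s))" for s
  define K where "K s = of_real (exp (- (\<tau> * s\<^sup>2))) / w s" for s
  have i1: "set_integrable lborel {0<..} (\<lambda>s. 1 / w s)"
    using integrable_recip[OF a1 ai] by (simp add: w_def)
  have iK: "set_integrable lborel {0<..} K"
  proof (rule set_integrable_bound[OF i1])
    show "set_borel_measurable lborel {0<..} K"
      unfolding set_borel_measurable_def K_def w_def by measurable
    show "AE x in lborel. x \<in> {0<..} \<longrightarrow> norm (K x) \<le> norm (1 / w x)"
    proof (rule AE_I2, rule impI)
      fix x :: real
      have "exp (- (\<tau> * x\<^sup>2)) \<le> 1" using \<tau> by simp
      then show "norm (K x) \<le> norm (1 / w x)"
        using den[of x] by (simp add: K_def norm_divide divide_right_mono)
    qed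
  qed
  have eK: "(1 - E s) / w s = 1 / w s - exp (- (a * of_real \<tau>)) * K s" for s
  proof -
    have "E s = exp (- (a * of_real \<tau>)) * of_real (exp (- (\<tau> * s\<^sup>2)))"
      by (simp add: E_def w_def algebra_simps flip: exp_add exp_of_real)
    then show ?thesis by (simp add: K_def diff_divide_distrib)
  qed
  have i2: "set_integrable lborel {0<..} (\<lambda>s. (1 - E s) / w s)"
    unfolding eK using i1 iK by (intro set_integral_diff(1) set_integrable_mult_right) auto
  have Kd: "K s = exp (a * of_real \<tau>) * (1 / w s - (1 - E s) / w s)" for s
    unfolding eK by (simp add: algebra_simps flip: exp_add)
  have "(LINT s:{0<..}|lborel. K s) = exp (a * of_real \<tau>) * ((LINT s:{0<..}|lborel. 1 / w s) - (LINT s:{0<..}|lborel. (1 - E s) / w s))"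
    unfolding Kd using set_integral_diff(2)[OF i1 i2] by simp
  also have "(LINT s:{0<..}|lborel. 1 / w s) = of_real pi / (2 * b)"
    using integral_recip[OF a1 ai] by (simp add: w_def b_def)
  also have "(LINT s:{0<..}|lborel. (1 - E s) / w s) = of_real (sqrt pi * sqrt \<tau>) * I"
    using fubini_id0[OF \<tau> nonzero_den[OF ai]] by (simp add: E_def w_def I_def)
  finally have L: "(LINT s:{0<..}|lborel. K s) = exp (a * of_real \<tau>) * (of_real pi / (2 * b) - of_real (sqrt pi * sqrt \<tau>) * I)" .
  have A: "Erfc c / b = 1 / b - (2 / of_real (sqrt pi)) * I * of_real (sqrt \<tau>)"
    unfolding erf using b0 by (simp add: c_def field_simps)
  have r1: "(2 / complex_of_real pi) * (of_real pi / (2 * b)) = 1 / b" using b0 by simp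
  have r2: "(2 / complex_of_real pi) * of_real (sqrt pi * sqrt \<tau>) = 2 / of_real (sqrt pi) * of_real (sqrt \<tau>)"
  proof -
    have gen: "2 / (p*p) * (p*q) = 2 / p * q" if "p > 0" for p q :: real
      using that by (simp add: field_simps)
    have "2 / pi * (sqrt pi * sqrt \<tau>) = 2 / sqrt pi * sqrt \<tau>"
      using gen[of "sqrt pi" "sqrt \<tau>"] by simp
    then have "complex_of_real (2 / pi * (sqrt pi * sqrt \<tau>)) = of_real (2 / sqrt pi * sqrt \<tau>)" by (rule arg_cong)
    then show ?thesis by simp
  qed
  have "exp (a * of_real \<tau>) * Erfc c / b = exp (a * of_real \<tau>) * (1 / b - (2 / of_real (sqrt pi)) * I * of_real (sqrt \<tau>))"
    by (simp only: times_divide_eq_right[symmetric] A)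
  also have "\<dots> = exp (a * of_real \<tau>) * ((2 / complex_of_real pi) * (of_real pi / (2 * b)) - ((2 / complex_of_real pi) * of_real (sqrt pi * sqrt \<tau>)) * I)"
    unfolding r1 r2 by (simp add: ac_simps)
  also have "\<dots> = (2 / of_real pi) * (exp (a * of_real \<tau>) * (of_real pi / (2 * b) - of_real (sqrt pi * sqrt \<tau>) * I))"
    by (simp add: algebra_simps)
  finally show ?thesis unfolding cs b_def[symmetric] L[symmetric] K_def w_def .
qed


lemma integrable_K:
  fixes a :: complex and \<tau> :: real
  assumes a1: "cmod a = 1" and ai: "Im a \<noteq> 0" and \<tau>: "0 \<le> \<tau>"
  shows "set_integrable lborel {0<..} (\<lambda>s. of_real (exp (- (\<tau> * s\<^sup>2))) / (of_real (s\<^sup>2) + a))"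
proof (rule set_integrable_bound[OF integrable_recip[OF a1 ai]])
  show "set_borel_measurable lborel {0<..} (\<lambda>s. of_real (exp (- (\<tau> * s\<^sup>2))) / (of_real (s\<^sup>2) + a))"
    unfolding set_borel_measurable_def by measurable
  show "AE x in lborel. x \<in> {0<..} \<longrightarrow> norm (of_real (exp (- (\<tau> * x\<^sup>2))) / (of_real (x\<^sup>2) + a)) \<le> norm (1 / (of_real (x\<^sup>2) + a))"
  proof (rule AE_I2, rule impI)
    fix x :: real
    have "exp (- (\<tau> * x\<^sup>2)) \<le> 1" using \<tau> by simp
    then show "norm (of_real (exp (- (\<tau> * x\<^sup>2))) / (of_real (x\<^sup>2) + a)) \<le> norm (1 / (of_real (x\<^sup>2) + a))"
      using nonzero_den[OF ai, of x] by (simp add: norm_divide divide_right_mono)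
  qed
qed

definition qf :: "real \<Rightarrow> real \<Rightarrow> real" where
  "qf k s = s^4 + (k - 2) * s\<^sup>2 + 1"

definition PP :: "real \<Rightarrow> real \<Rightarrow> real" where
  "PP k \<tau> = (LINT s:{0<..}|lborel. exp (- (\<tau> * s\<^sup>2)) / qf k s)"

lemma qf_lower:
  assumes "0 < k" "k < 4"
  shows "k/4 * (1 + s\<^sup>2) \<le> qf k s" "0 < qf k s"
proof -
  have id: "qf k s - k/4 * (1 + s\<^sup>2)\<^sup>2 = (1 - k/4) * (s\<^sup>2 - 1)\<^sup>2"
    by (simp add: qf_def power2_eq_square algebra_simps power4_eq_xxxx)
  have "0 \<le> (1 - k/4) * (s\<^sup>2 - 1)\<^sup>2" using assms by simp
  then have l: "k/4 * (1 + s\<^sup>2)\<^sup>2 \<le> qf k s" using id by simp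
  have "k/4 * (1 + s\<^sup>2) \<le> k/4 * (1 + s\<^sup>2)\<^sup>2"
  proof -
    have h1: "1 \<le> 1 + s\<^sup>2" by simp
    have "(1 + s\<^sup>2) * 1 \<le> (1 + s\<^sup>2) * (1 + s\<^sup>2)" by (rule mult_left_mono[OF h1]) simp
    then have "1 + s\<^sup>2 \<le> (1 + s\<^sup>2)\<^sup>2" by (simp only: power2_eq_square mult_1_right)
    then show ?thesis using assms by (intro mult_left_mono) auto
  qed
  then show "k/4 * (1 + s\<^sup>2) \<le> qf k s" using l by linarith
  moreover have "0 < k/4 * (1 + s\<^sup>2)" using assms by (simp add: add_pos_nonneg)
  ultimately show "0 < qf k s" by linarith
qed

lemma integrable_PP:
  assumes "0 < k" "k < 4" "0 \<le> \<tau>"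
  shows "set_integrable lborel {0<..} (\<lambda>s. exp (- (\<tau> * s\<^sup>2)) / qf k s)"
proof -
  have i1: "set_integrable lborel {0<..} (\<lambda>s::real. 1 / (1 + s\<^sup>2))"
    using integrable_I0i_1_div_plus_square by (simp add: interval_lebesgue_integral_0_infty)
  have i2: "set_integrable lborel {0<..} (\<lambda>s::real. (4/k) * (1 / (1 + s\<^sup>2)))"
    using set_integrable_mult_right[OF i1, of "4/k"] by simp
  show ?thesis
  proof (rule set_integrable_bound[OF i2])
    show "set_borel_measurable lborel {0<..} (\<lambda>s. exp (- (\<tau> * s\<^sup>2)) / qf k s)"
      unfolding set_borel_measurable_def qf_def by measurable
    show "AE x in lborel. x \<in> {0<..} \<longrightarrow> norm (exp (- (\<tau> * x\<^sup>2)) / qf k x) \<le> norm ((4/k) * (1 / (1 + x\<^sup>2)))"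
    proof (rule AE_I2, rule impI)
      fix x :: real
      have e: "exp (- (\<tau> * x\<^sup>2)) \<le> 1" using assms by simp
      have q: "k/4 * (1 + x\<^sup>2) \<le> qf k x" "0 < qf k x" using qf_lower[OF assms(1,2)] by auto
      have p: "0 < k/4 * (1 + x\<^sup>2)" using assms by (simp add: add_pos_nonneg)
      have "norm (exp (- (\<tau> * x\<^sup>2)) / qf k x) = exp (- (\<tau> * x\<^sup>2)) / qf k x" using q by simp
      also have "\<dots> \<le> 1 / qf k x" using e q by (simp add: divide_right_mono)
      also have "\<dots> \<le> 1 / (k/4 * (1 + x\<^sup>2))" using q p by (intro divide_left_mono) (auto intro: mult_pos_pos)
      also have "\<dots> = norm ((4/k) * (1 / (1 + x\<^sup>2)))" using assms p by (simp add: abs_of_pos field_simps)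
      finally show "norm (exp (- (\<tau> * x\<^sup>2)) / qf k x) \<le> norm ((4/k) * (1 / (1 + x\<^sup>2)))" .
    qed
  qed
qed

lemma u0_rep:
  assumes k: "0 < k" "k < 4" and \<tau>: "0 \<le> \<tau>"
  shows "u0 k \<tau> = of_real (1 - 2 * sqrt k / pi * PP k \<tau>)"
proof -
  define A where "A = alpha k"
  define B where "B = beta k"
  note ap = alpha_props[OF k]
  have A1: "cmod A = 1" "Im A \<noteq> 0" using ap by (auto simp: A_def)
  have B1: "cmod B = 1" "Im B \<noteq> 0" using ap by (auto simp: B_def)
  have AB: "A - B \<noteq> 0"
  proof
    assume "A - B = 0"
    then have "Im A = Im B" by (metis eq_iff_diff_eq_0)
    then show False using ap by (simp add: A_def B_def)
  qed
  define KA where "KA s = of_real (exp (- (\<tau> * s\<^sup>2))) / (of_real (s\<^sup>2) + A)" for s :: real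
  define KB where "KB s = of_real (exp (- (\<tau> * s\<^sup>2))) / (of_real (s\<^sup>2) + B)" for s :: real
  have iA: "set_integrable lborel {0<..} KA" unfolding KA_def by (rule integrable_K[OF A1 \<tau>])
  have iB: "set_integrable lborel {0<..} KB" unfolding KB_def by (rule integrable_K[OF B1 \<tau>])
  have diff: "KA s - KB s = (B - A) * of_real (exp (- (\<tau> * s\<^sup>2)) / qf k s)" for s
  proof -
    have nA: "of_real (s\<^sup>2) + A \<noteq> 0" by (rule nonzero_den[OF A1(2)])
    have nB: "of_real (s\<^sup>2) + B \<noteq> 0" by (rule nonzero_den[OF B1(2)])
    have prod: "(of_real (s\<^sup>2) + A) * (of_real (s\<^sup>2) + B) = of_real (qf k s)"
    proof -
      have "(of_real (s\<^sup>2) + A) * (of_real (s\<^sup>2) + B) = of_real (s\<^sup>2) * of_real (s\<^sup>2) + (A + B) * of_real (s\<^sup>2) + A * B"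
        by (simp add: algebra_simps)
      also have "\<dots> = of_real (s\<^sup>2) * of_real (s\<^sup>2) + of_real (k - 2) * of_real (s\<^sup>2) + 1"
        using ap(6,7) by (simp only: A_def B_def)
      also have "\<dots> = of_real (qf k s)"
        by (simp add: qf_def power4_eq_xxxx power2_eq_square)
      finally show ?thesis .
    qed
    have "KA s - KB s = of_real (exp (- (\<tau> * s\<^sup>2))) * ((of_real (s\<^sup>2) + B) - (of_real (s\<^sup>2) + A)) / ((of_real (s\<^sup>2) + A) * (of_real (s\<^sup>2) + B))"
      using nA nB by (simp add: KA_def KB_def field_simps)
    also have "\<dots> = (B - A) * of_real (exp (- (\<tau> * s\<^sup>2)) / qf k s)"
      unfolding prod by (simp add: field_simps)
    finally show ?thesis .
  qed
  have LA: "exp (A * of_real \<tau>) * Erfc (csqrt (A * of_real \<tau>)) / csqrt A = (2 / of_real pi) * (LINT s:{0<..}|lborel. KA s)"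
    unfolding KA_def by (rule rep[OF A1 \<tau>])
  have LB: "exp (B * of_real \<tau>) * Erfc (csqrt (B * of_real \<tau>)) / csqrt B = (2 / of_real pi) * (LINT s:{0<..}|lborel. KB s)"
    unfolding KB_def by (rule rep[OF B1 \<tau>])
  have "(LINT s:{0<..}|lborel. KA s) - (LINT s:{0<..}|lborel. KB s) = (LINT s:{0<..}|lborel. KA s - KB s)"
    using set_integral_diff(2)[OF iA iB] by simp
  also have "\<dots> = (B - A) * of_real (PP k \<tau>)"
    unfolding diff PP_def by (simp only: set_integral_mult_right set_integral_complex_of_real)
  finally have D: "(LINT s:{0<..}|lborel. KA s) - (LINT s:{0<..}|lborel. KB s) = (B - A) * of_real (PP k \<tau>)" .
  have "u0 k \<tau> = 1 + of_real (sqrt k) / (A - B) * ((2 / of_real pi) * ((LINT s:{0<..}|lborel. KA s) - (LINT s:{0<..}|lborel. KB s)))"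
    unfolding u0_def A_def[symmetric] B_def[symmetric] LA LB by (simp add: algebra_simps)
  also have "\<dots> = 1 - of_real (sqrt k) * (2 / of_real pi) * of_real (PP k \<tau>)"
    unfolding D using AB by (simp add: field_simps)
  also have "\<dots> = of_real (1 - 2 * sqrt k / pi * PP k \<tau>)" by simp
  finally show ?thesis .
qed


lemma not_AE_nonpos: "\<not> (AE s in lborel. \<not> (0::real) < s)"
proof
  assume "AE s in lborel. \<not> (0::real) < s"
  then obtain N where N: "{x \<in> space lborel. \<not> \<not> (0::real) < x} \<subseteq> N" "emeasure lborel N = 0" "N \<in> sets lborel"
    by (rule AE_E)
  have "{0<..(1::real)} \<subseteq> N" using N(1) by auto
  then have "emeasure lborel {0<..(1::real)} \<le> emeasure lborel N" using N(3) by (rule emeasure_mono)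
  then show False using N(2) by simp
qed

lemma PP_strict_decr:
  assumes k: "0 < k" "k < 4" and xy: "0 \<le> x" "x < y"
  shows "PP k y < PP k x"
proof -
  define g where "g s = exp (- (x * s\<^sup>2)) / qf k s - exp (- (y * s\<^sup>2)) / qf k s" for s
  have ix: "set_integrable lborel {0<..} (\<lambda>s. exp (- (x * s\<^sup>2)) / qf k s)"
    using integrable_PP[OF k xy(1)] .
  have iy: "set_integrable lborel {0<..} (\<lambda>s. exp (- (y * s\<^sup>2)) / qf k s)"
    using integrable_PP[OF k] xy by simp
  have gpos: "0 < g s" if "0 < s" for s
  proof -
    have "y * s\<^sup>2 > x * s\<^sup>2" using xy that by (intro mult_strict_right_mono) auto
    then have "exp (- (y * s\<^sup>2)) < exp (- (x * s\<^sup>2))" by simp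
    then show ?thesis using qf_lower(2)[OF k, of s] by (simp add: g_def divide_strict_right_mono)
  qed
  have PPd: "PP k x - PP k y = (LINT s:{0<..}|lborel. g s)"
    unfolding PP_def g_def using set_integral_diff(2)[OF ix iy] by simp
  define G where "G s = indicator {0<..} s *\<^sub>R g s" for s :: real
  have iG: "integrable lborel G"
    using set_integral_diff(1)[OF ix iy] unfolding G_def g_def set_integrable_def .
  have G0: "0 \<le> G s" for s using gpos[of s] by (auto simp: G_def indicator_def less_imp_le)
  have nz: "integral\<^sup>L lborel G \<noteq> 0"
  proof
    assume "integral\<^sup>L lborel G = 0"
    then have "AE s in lborel. G s = 0" using integral_nonneg_eq_0_iff_AE[OF iG] G0 by simp
    moreover have "AE s in lborel. G s = 0 \<longrightarrow> \<not> (0::real) < s"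
      by (rule AE_I2) (auto simp: G_def indicator_def dest: gpos)
    ultimately have "AE s in lborel. \<not> (0::real) < s" by (rule AE_mp)
    then show False using not_AE_nonpos by simp
  qed
  have "0 \<le> integral\<^sup>L lborel G" using G0 by (intro Bochner_Integration.integral_nonneg) auto
  with nz have "0 < integral\<^sup>L lborel G" by simp
  then have "0 < PP k x - PP k y" unfolding PPd set_lebesgue_integral_def G_def .
  then show ?thesis by simp
qed

lemma PP_bounds:
  assumes k: "0 < k" "k < 4" and \<tau>: "0 < \<tau>"
  shows "0 \<le> PP k \<tau>" "PP k \<tau> \<le> (4/k) * (sqrt pi / (2 * sqrt \<tau>))"
proof -
  have i: "set_integrable lborel {0<..} (\<lambda>s. exp (- (\<tau> * s\<^sup>2)) / qf k s)"
    using integrable_PP[OF k] \<tau> by simp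
  show "0 \<le> PP k \<tau>"
    unfolding PP_def set_lebesgue_integral_def
    using qf_lower(2)[OF k] by (intro Bochner_Integration.integral_nonneg) (auto simp: indicator_def intro: divide_nonneg_pos)
  have gS: "has_bochner_integral lborel (\<lambda>s. indicator {0<..} s *\<^sub>R exp (- (\<tau> * s\<^sup>2))) (sqrt pi / (2 * sqrt \<tau>))"
    by (rule gauss_S[OF \<tau>])
  have ig: "set_integrable lborel {0<..} (\<lambda>s. (4/k) * exp (- (\<tau> * s\<^sup>2)))"
    using gS by (intro set_integrable_mult_right) (auto simp: set_integrable_def has_bochner_integral_iff)
  have vg: "(LINT s:{0<..}|lborel. (4/k) * exp (- (\<tau> * s\<^sup>2))) = (4/k) * (sqrt pi / (2 * sqrt \<tau>))"
    using gS by (simp add: set_lebesgue_integral_def has_bochner_integral_iff)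
  have "PP k \<tau> \<le> (LINT s:{0<..}|lborel. (4/k) * exp (- (\<tau> * s\<^sup>2)))"
    unfolding PP_def
  proof (rule set_integral_mono[OF i ig])
    fix s :: real
    have q: "k/4 * (1 + s\<^sup>2) \<le> qf k s" "0 < qf k s" using qf_lower[OF k] by auto
    have "k/4 \<le> k/4 * (1 + s\<^sup>2)" using k by simp
    then have q4: "k/4 \<le> qf k s" using q by linarith
    have "exp (- (\<tau> * s\<^sup>2)) / qf k s \<le> exp (- (\<tau> * s\<^sup>2)) / (k/4)"
      using q4 k by (intro divide_left_mono) auto
    then show "exp (- (\<tau> * s\<^sup>2)) / qf k s \<le> (4/k) * exp (- (\<tau> * s\<^sup>2))" by (simp add: mult.commute)
  qed
  then show "PP k \<tau> \<le> (4/k) * (sqrt pi / (2 * sqrt \<tau>))" using vg by simp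
qed

lemma PP_lim:
  assumes k: "0 < k" "k < 4"
  shows "(PP k \<longlongrightarrow> 0) at_top"
proof (rule tendsto_sandwich[of "\<lambda>_. 0" _ _ "\<lambda>\<tau>. (4/k) * (sqrt pi / 2) / sqrt \<tau>"])
  show "eventually (\<lambda>\<tau>. 0 \<le> PP k \<tau>) at_top"
    using eventually_gt_at_top[of 0] by eventually_elim (rule PP_bounds(1)[OF k])
  show "eventually (\<lambda>\<tau>. PP k \<tau> \<le> (4/k) * (sqrt pi / 2) / sqrt \<tau>) at_top"
    using eventually_gt_at_top[of 0] by eventually_elim (use PP_bounds(2)[OF k] in simp)
  show "((\<lambda>_. 0) \<longlongrightarrow> (0::real)) at_top" by simp
  show "((\<lambda>\<tau>. (4/k) * (sqrt pi / 2) / sqrt \<tau>) \<longlongrightarrow> 0) at_top"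
    by (rule tendsto_divide_0[OF tendsto_const filterlim_at_top_imp_at_infinity[OF sqrt_at_top]])
qed

theorem corollary3p2:
  fixes \<kappa> \<xi> :: real and u :: "real \<Rightarrow> real"
  assumes "0 < \<kappa>" and "\<kappa> < 4"
    and "\<And>\<tau>. u \<tau> = (1 - \<xi>) * Re (u0 \<kappa> \<tau>) + \<xi>"
  shows "(\<xi> < 1 \<longrightarrow> strict_mono_on {0..} u)
       \<and> (\<xi> > 1 \<longrightarrow> monotone_on {0..} (<) (>) u)
       \<and> (\<xi> = 1 \<longrightarrow> (\<forall>\<tau>\<ge>0. u \<tau> = 1))
       \<and> (u \<longlongrightarrow> 1) at_top"
proof -
  note k = assms(1,2)
  define c where "c = 2 * sqrt \<kappa> / pi"
  have c0: "0 < c" using k by (simp add: c_def)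
  have ur: "u \<tau> = 1 - (1 - \<xi>) * c * PP \<kappa> \<tau>" if "0 \<le> \<tau>" for \<tau>
    using assms(3)[of \<tau>] u0_rep[OF k that] by (simp add: c_def algebra_simps)
  have mono: "u x < u y" if "\<xi> < 1" "0 \<le> x" "x < y" for x y
  proof -
    have "PP \<kappa> y < PP \<kappa> x" by (rule PP_strict_decr[OF k that(2,3)])
    moreover have "0 < (1 - \<xi>) * c" using that c0 by simp
    ultimately have "(1 - \<xi>) * c * PP \<kappa> y < (1 - \<xi>) * c * PP \<kappa> x" by (rule mult_strict_left_mono)
    then show ?thesis using ur[of x] ur[of y] that by simp
  qed
  have anti: "u y < u x" if "\<xi> > 1" "0 \<le> x" "x < y" for x y
  proof -
    have "PP \<kappa> y < PP \<kappa> x" by (rule PP_strict_decr[OF k that(2,3)])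
    moreover have "0 < (\<xi> - 1) * c" using that c0 by simp
    ultimately have "(\<xi> - 1) * c * PP \<kappa> y < (\<xi> - 1) * c * PP \<kappa> x" by (rule mult_strict_left_mono)
    then show ?thesis using ur[of x] ur[of y] that by (simp add: algebra_simps)
  qed
  have P1: "\<xi> < 1 \<longrightarrow> strict_mono_on {0..} u"
    by (auto intro!: strict_mono_onI mono)
  have P2: "\<xi> > 1 \<longrightarrow> monotone_on {0..} (<) (>) u"
    by (auto intro!: monotone_onI anti)
  have P3: "\<xi> = 1 \<longrightarrow> (\<forall>\<tau>\<ge>0. u \<tau> = 1)"
    using assms(3) by simp
  have "((\<lambda>\<tau>. 1 - (1 - \<xi>) * c * PP \<kappa> \<tau>) \<longlongrightarrow> 1 - (1 - \<xi>) * c * 0) at_top"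
    by (intro tendsto_intros PP_lim[OF k])
  then have L: "((\<lambda>\<tau>. 1 - (1 - \<xi>) * c * PP \<kappa> \<tau>) \<longlongrightarrow> 1) at_top" by simp
  have ev: "eventually (\<lambda>\<tau>. 1 - (1 - \<xi>) * c * PP \<kappa> \<tau> = u \<tau>) at_top"
    using eventually_ge_at_top[of 0] by eventually_elim (simp add: ur)
  have P4: "(u \<longlongrightarrow> 1) at_top" using tendsto_cong[OF ev] L by simp
  show ?thesis using P1 P2 P3 P4 by blast
qed

end
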